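(* $\mathfrak{b}\leq\mathfrak{a}(\mathcal{BI})$.
   Context: $\mathcal{F}in\times\mathcal{F}in$ is the ideal on $\omega\times\omega$ consisting of those $A$ such that for all but finitely many $n\in\omega$ the set $\{m:(n,m)\in A\}$ is finite. The Boring ideal $\mathcal{BI}$ is the ideal on $\omega^{3}$ consisting of those $A\subseteq\omega^{3}$ such that for every $n\in\omega$ the set $\{(j,k):(n,j,k)\in A\}$ belongs to $\mathcal{F}in\times\mathcal{F}in$, and for all but finitely many $n\in\omega$ the set $A\cap(\{n\}\times\omega^{2})$ is finite. For an ideal $\mathcal{J}$ on a countable set, $\mathfrak{a}(\mathcal{J})$ is the smallest size of an uncountable family $\mathcal{A}$ of $\mathcal{J}$-positive sets (sets not in $\mathcal{J}$) which is maximal with respect to the property that $A\cap B\in\mathcal{J}$ for all distinct $A,B\in\mathcal{A}$. $\mathfrak{b}$ is the bounding number. *)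

theory Defs
  imports Main "HOL-Library.Countable_Set"
begin

definition FinFin :: "(nat \<times> nat) set set" where
  "FinFin = {A. finite {n. infinite {m. (n, m) \<in> A}}}"

definition BI :: "(nat \<times> nat \<times> nat) set set" where
  "BI = {A. (\<forall>n. {(j, k). (n, j, k) \<in> A} \<in> FinFin) \<and>
            finite {n. infinite (A \<inter> ({n} \<times> UNIV))}}"

definition ad_family :: "'a set set \<Rightarrow> 'a set set \<Rightarrow> bool" where
  "ad_family J \<A> \<longleftrightarrow> (\<forall>A\<in>\<A>. A \<notin> J) \<and> (\<forall>A\<in>\<A>. \<forall>B\<in>\<A>. A \<noteq> B \<longrightarrow> A \<inter> B \<in> J)"

definition mad_family :: "'a set set \<Rightarrow> 'a set set \<Rightarrow> bool" where
  "mad_family J \<A> \<longleftrightarrow> ad_family J \<A> \<and> (\<forall>X. X \<notin> \<A> \<longrightarrow> \<not> ad_family J (insert X \<A>))"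

definition le_star :: "(nat \<Rightarrow> nat) \<Rightarrow> (nat \<Rightarrow> nat) \<Rightarrow> bool" where
  "le_star f g \<longleftrightarrow> finite {n. g n < f n}"

definition unbounded_family :: "(nat \<Rightarrow> nat) set \<Rightarrow> bool" where
  "unbounded_family F \<longleftrightarrow> \<not> (\<exists>g. \<forall>f\<in>F. le_star f g)"

definition card_le :: "'a set \<Rightarrow> 'b set \<Rightarrow> bool" where
  "card_le X Y \<longleftrightarrow> (\<exists>h. inj_on h X \<and> h ` X \<subseteq> Y)"

end

theory Submission
  imports Defs
begin

definition sec :: "(nat \<times> nat \<times> nat) set \<Rightarrow> nat \<Rightarrow> (nat \<times> nat) set" where
  "sec Z n = {p. (n, p) \<in> Z}"

lemma sec_Int: "sec (X \<inter> Y) m = sec X m \<inter> sec Y m"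
  by (auto simp: sec_def)

lemma inf_col: "infinite (A \<inter> ({n} \<times> UNIV)) \<longleftrightarrow> infinite (sec A n)"
proof -
  have "A \<inter> ({n} \<times> UNIV) = Pair n ` sec A n" by (auto simp: sec_def)
  moreover have "inj_on (Pair n) (sec A n)" by (auto simp: inj_on_def)
  ultimately show ?thesis by (simp add: finite_image_iff)
qed

lemma BI_iff: "A \<in> BI \<longleftrightarrow> (\<forall>n. sec A n \<in> FinFin) \<and> finite {n. infinite (sec A n)}"
proof -
  have "{(j, k). (n, j, k) \<in> A} = sec A n" for n by (auto simp: sec_def)
  then show ?thesis unfolding BI_def using inf_col by simp
qed

lemma FinFin_mono: "S \<in> FinFin \<Longrightarrow> T \<subseteq> S \<Longrightarrow> T \<in> FinFin"
proof -
  assume a: "S \<in> FinFin" "T \<subseteq> S"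
  have "{n. infinite {m. (n, m) \<in> T}} \<subseteq> {n. infinite {m. (n, m) \<in> S}}"
  proof (intro subsetI, simp)
    fix x assume "infinite {m. (x, m) \<in> T}"
    moreover have "{m. (x, m) \<in> T} \<subseteq> {m. (x, m) \<in> S}" using a(2) by auto
    ultimately show "infinite {m. (x, m) \<in> S}" using finite_subset by blast
  qed
  then show ?thesis using a(1) unfolding FinFin_def by (auto intro: finite_subset)
qed

lemma FinFin_empty: "{} \<in> FinFin"
  by (simp add: FinFin_def)

lemma FinFin_sub_exists:
  assumes "infinite S" shows "\<exists>S'. S' \<subseteq> S \<and> infinite S' \<and> S' \<in> FinFin"
proof (cases "\<exists>j. infinite {l. (j, l) \<in> S}")
  case True
  then obtain j where j: "infinite {l. (j, l) \<in> S}" by auto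
  define S' where "S' = {p \<in> S. fst p = j}"
  have "S' = Pair j ` {l. (j, l) \<in> S}" by (auto simp: S'_def)
  moreover have "inj_on (Pair j) {l. (j, l) \<in> S}" by (auto simp: inj_on_def)
  ultimately have "infinite S'" using j by (simp add: finite_image_iff)
  moreover have "{n. infinite {m. (n, m) \<in> S'}} \<subseteq> {j}" by (auto simp: S'_def)
  then have "S' \<in> FinFin" unfolding FinFin_def by (auto intro: finite_subset)
  moreover have "S' \<subseteq> S" by (auto simp: S'_def)
  ultimately show ?thesis by blast
next
  case False
  then have "S \<in> FinFin" by (simp add: FinFin_def)
  then show ?thesis using assms by blast
qed

lemma choose_seq:
  assumes "\<And>k. infinite (T k)"
  shows "\<exists>n::nat\<Rightarrow>nat. strict_mono n \<and> (\<forall>k. n k \<in> T k \<and> L k < n k)"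
proof -
  have ex: "\<exists>y. y \<in> T k \<and> L k < y \<and> x < y" for k x
  proof -
    obtain y where "y > L k + x" "y \<in> T k" using assms[of k] unfolding infinite_nat_iff_unbounded by blast
    then show ?thesis by auto
  qed
  have "\<exists>f. \<forall>k. (f k \<in> T k \<and> L k < f k) \<and> f k < f (Suc k)"
    by (rule dependent_nat_choice[of "\<lambda>k y. y \<in> T k \<and> L k < y" "\<lambda>k x y. x < y"])
      (use ex in blast)+
  then obtain f where "\<forall>k. (f k \<in> T k \<and> L k < f k) \<and> f k < f (Suc k)" by blast
  then show ?thesis by (auto simp: strict_mono_Suc_iff)
qed

lemma contra:
  assumes mad: "mad_family BI \<A>" and XnBI: "X \<notin> BI" and XY: "\<forall>Y\<in>\<A>. X \<inter> Y \<in> BI"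
  shows False
proof (cases "X \<in> \<A>")
  case True
  then show False using XY XnBI by auto
next
  case False
  have ad: "ad_family BI \<A>" using mad by (simp add: mad_family_def)
  have "ad_family BI (insert X \<A>)"
    using ad XnBI XY unfolding ad_family_def by (auto simp: Int_commute)
  then show False using mad False by (simp add: mad_family_def)
qed

lemma card_le_img: "card_le (f ` \<A>) \<A>"
  unfolding card_le_def
  by (rule exI[of _ "inv_into \<A> f"]) (auto intro: inj_on_inv_into inv_into_into)


lemma caseT2:
  fixes A :: "nat \<Rightarrow> (nat \<times> nat \<times> nat) set"
  assumes mad: "mad_family BI \<A>" and injA: "inj A" and rA: "range A \<subseteq> \<A>"
    and T2: "\<And>k. infinite {m. infinite (sec (A k) m)}"
  shows "\<exists>F. unbounded_family F \<and> card_le F \<A>"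
proof -
  have ad: "ad_family BI \<A>" using mad by (simp add: mad_family_def)
  have adI: "B \<inter> C \<in> BI" if "B \<in> \<A>" "C \<in> \<A>" "B \<noteq> C" for B C
    using ad that by (auto simp: ad_family_def)
  define bnd where "bnd Z = Suc (Max {m. infinite (sec Z m)})" for Z
  have bndP: "finite (sec Z m)" if "Z \<in> BI" "bnd Z \<le> m" for Z m
  proof (rule ccontr)
    assume "infinite (sec Z m)"
    moreover have "finite {m. infinite (sec Z m)}" using that(1) by (simp add: BI_iff)
    ultimately have "m \<le> Max {m. infinite (sec Z m)}" by (intro Max_ge) auto
    then show False using that(2) by (simp add: bnd_def)
  qed
  define f where "f B = (\<lambda>k. bnd (A k \<inter> B))" for B
  have "unbounded_family (f ` \<A>)"
    unfolding unbounded_family_def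
  proof
    assume "\<exists>g. \<forall>f\<in>f ` \<A>. le_star f g"
    then obtain g where g: "\<And>B. B \<in> \<A> \<Longrightarrow> finite {k. g k < bnd (A k \<inter> B)}"
      by (auto simp: f_def le_star_def)
    define h where "h k = (\<Sum>i<k. bnd (A k \<inter> A i))" for k
    obtain n where nmono: "strict_mono n" and nT: "\<And>k. infinite (sec (A k) (n k))"
      and ng: "\<And>k. g k + h k < n k"
      using choose_seq[of "\<lambda>k. {m. infinite (sec (A k) m)}" "\<lambda>k. g k + h k"] T2 by auto
    define S where "S k = (SOME S. S \<subseteq> sec (A k) (n k) \<and> infinite S \<and> S \<in> FinFin)" for k
    have S: "S k \<subseteq> sec (A k) (n k) \<and> infinite (S k) \<and> S k \<in> FinFin" for k
      unfolding S_def using FinFin_sub_exists[OF nT[of k]] by (rule someI_ex)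
    define X where "X = {(m, p). \<exists>k. m = n k \<and> p \<in> S k}"
    have injn: "inj n" using nmono by (rule strict_mono_imp_inj_on)
    have secX: "sec X (n k) = S k" for k
      using injn by (auto simp: sec_def X_def inj_eq)
    have secX0: "sec X m = {}" if "m \<notin> range n" for m
      using that by (auto simp: sec_def X_def)
    have XnBI: "X \<notin> BI"
    proof
      assume "X \<in> BI"
      then have "finite {m. infinite (sec X m)}" by (simp add: BI_iff)
      moreover have "range n \<subseteq> {m. infinite (sec X m)}" using secX S by auto
      moreover have "infinite (range n)" using injn by (rule range_inj_infinite)
      ultimately show False using finite_subset by blast
    qed
    have "X \<inter> Y \<in> BI" if Y: "Y \<in> \<A>" for Y
    proof -
      have "\<exists>N. \<forall>k\<ge>N. finite (sec (A k \<inter> Y) (n k))"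
      proof (cases "Y \<in> range A")
        case True
        then obtain i where i: "Y = A i" by auto
        have "\<forall>k\<ge>Suc i. finite (sec (A k \<inter> Y) (n k))"
        proof (intro allI impI)
          fix k assume k: "Suc i \<le> k"
          then have "A k \<noteq> A i" using injA by (metis inj_eq not_less_eq_eq order_refl)
          then have BIk: "A k \<inter> A i \<in> BI" using adI rA by blast
          have "bnd (A k \<inter> A i) \<le> h k" unfolding h_def using k
            by (intro member_le_sum) auto
          then show "finite (sec (A k \<inter> Y) (n k))"
            using bndP[OF BIk, of "n k"] ng[of k] i by auto
        qed
        then show ?thesis by blast
      next
        case False
        obtain N where N: "{k. g k < bnd (A k \<inter> Y)} \<subseteq> {..<N}"
          using finite_nat_bounded[OF g[OF Y]] by blast
        have "\<forall>k\<ge>N. finite (sec (A k \<inter> Y) (n k))"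
        proof (intro allI impI)
          fix k assume k: "N \<le> k"
          have "k \<notin> {..<N}" using k by simp
          then have le: "bnd (A k \<inter> Y) \<le> g k" using N by (meson mem_Collect_eq not_le subsetD)
          have "A k \<noteq> Y" using False by auto
          then have BIk: "A k \<inter> Y \<in> BI" using adI rA Y by blast
          show "finite (sec (A k \<inter> Y) (n k))"
            using bndP[OF BIk, of "n k"] ng[of k] le by auto
        qed
        then show ?thesis by blast
      qed
      then obtain N where N: "\<And>k. k \<ge> N \<Longrightarrow> finite (sec (A k \<inter> Y) (n k))" by blast
      have sec1: "sec (X \<inter> Y) m \<in> FinFin" for m
      proof (cases "m \<in> range n")
        case True
        then obtain k where "m = n k" by auto
        then show ?thesis using secX S by (auto simp: sec_Int intro: FinFin_mono)
      next
        case False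
        then show ?thesis using secX0 by (simp add: sec_Int FinFin_empty)
      qed
      have "{m. infinite (sec (X \<inter> Y) m)} \<subseteq> n ` {..<N}"
      proof
        fix m assume m: "m \<in> {m. infinite (sec (X \<inter> Y) m)}"
        then have "m \<in> range n" using secX0 by (fastforce simp: sec_Int)
        then obtain k where k: "m = n k" by auto
        have "k < N"
        proof (rule ccontr)
          assume "\<not> k < N"
          then have "finite (sec (A k \<inter> Y) (n k))" using N by auto
          moreover have "sec (X \<inter> Y) (n k) \<subseteq> sec (A k \<inter> Y) (n k)"
            using secX S by (auto simp: sec_Int)
          ultimately show False using m k finite_subset by auto
        qed
        then show "m \<in> n ` {..<N}" using k by auto
      qed
      then have "finite {m. infinite (sec (X \<inter> Y) m)}" using finite_subset by blast
      then show ?thesis using sec1 by (simp add: BI_iff)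
    qed
    then show False using contra[OF mad XnBI] by blast
  qed
  then show ?thesis using card_le_img by blast
qed


lemma sec_FinFin: "sec Z c \<in> FinFin \<longleftrightarrow> finite {j. infinite {l. (c, j, l) \<in> Z}}"
  by (simp add: FinFin_def sec_def)

lemma caseT1:
  fixes A :: "nat \<Rightarrow> (nat \<times> nat \<times> nat) set" and c :: nat
  assumes mad: "mad_family BI \<A>" and injA: "inj A" and rA: "range A \<subseteq> \<A>"
    and T1: "\<And>k. sec (A k) c \<notin> FinFin"
  shows "\<exists>F. unbounded_family F \<and> card_le F \<A>"
proof -
  have ad: "ad_family BI \<A>" using mad by (simp add: mad_family_def)
  have adI: "B \<inter> C \<in> BI" if "B \<in> \<A>" "C \<in> \<A>" "B \<noteq> C" for B C
    using ad that by (auto simp: ad_family_def)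
  define row where "row Z j = {l. (c, j, l) \<in> Z}" for Z :: "(nat \<times> nat \<times> nat) set" and j :: nat
  define bnd where "bnd Z = Suc (Max {j. infinite (row Z j)})" for Z
  have bndP: "finite (row Z m)" if "Z \<in> BI" "bnd Z \<le> m" for Z m
  proof (rule ccontr)
    assume "infinite (row Z m)"
    moreover have "finite {m. infinite (row Z m)}" using that(1)
      by (simp add: BI_iff sec_FinFin row_def)
    ultimately have "m \<le> Max {m. infinite (row Z m)}" by (intro Max_ge) auto
    then show False using that(2) by (simp add: bnd_def)
  qed
  have T1': "infinite {j. infinite (row (A k) j)}" for k
    using T1[of k] by (simp add: sec_FinFin row_def)
  define f where "f B = (\<lambda>k. bnd (A k \<inter> B))" for B
  have "unbounded_family (f ` \<A>)"
    unfolding unbounded_family_def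
  proof
    assume "\<exists>g. \<forall>f\<in>f ` \<A>. le_star f g"
    then obtain g where g: "\<And>B. B \<in> \<A> \<Longrightarrow> finite {k. g k < bnd (A k \<inter> B)}"
      by (auto simp: f_def le_star_def)
    define h where "h k = (\<Sum>i<k. bnd (A k \<inter> A i))" for k
    obtain n where nmono: "strict_mono n" and nT: "\<And>k. infinite (row (A k) (n k))"
      and ng: "\<And>k. g k + h k < n k"
      using choose_seq[of "\<lambda>k. {j. infinite (row (A k) j)}" "\<lambda>k. g k + h k"] T1' by auto
    define X where "X = {(m, jj, l). m = c \<and> (\<exists>k. jj = n k \<and> (c, n k, l) \<in> A k)}"
    have injn: "inj n" using nmono by (rule strict_mono_imp_inj_on)
    have rowX: "row X (n k) = row (A k) (n k)" for k
      using injn by (auto simp: row_def X_def inj_eq)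
    have rowX0: "row X m = {}" if "m \<notin> range n" for m
      using that by (auto simp: row_def X_def)
    have secX0: "sec X m = {}" if "m \<noteq> c" for m
      using that by (auto simp: sec_def X_def)
    have XnBI: "X \<notin> BI"
    proof
      assume "X \<in> BI"
      then have "finite {m. infinite (row X m)}" by (simp add: BI_iff sec_FinFin row_def)
      moreover have "range n \<subseteq> {m. infinite (row X m)}" using rowX nT by auto
      moreover have "infinite (range n)" using injn by (rule range_inj_infinite)
      ultimately show False using finite_subset by blast
    qed
    have "X \<inter> Y \<in> BI" if Y: "Y \<in> \<A>" for Y
    proof -
      have "\<exists>N. \<forall>k\<ge>N. finite (row (A k \<inter> Y) (n k))"
      proof (cases "Y \<in> range A")
        case True
        then obtain i where i: "Y = A i" by auto
        have "\<forall>k\<ge>Suc i. finite (row (A k \<inter> Y) (n k))"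
        proof (intro allI impI)
          fix k assume k: "Suc i \<le> k"
          then have "A k \<noteq> A i" using injA by (metis inj_eq not_less_eq_eq order_refl)
          then have BIk: "A k \<inter> A i \<in> BI" using adI rA by blast
          have "bnd (A k \<inter> A i) \<le> h k" unfolding h_def using k
            by (intro member_le_sum) auto
          then show "finite (row (A k \<inter> Y) (n k))"
            using bndP[OF BIk, of "n k"] ng[of k] i by auto
        qed
        then show ?thesis by blast
      next
        case False
        obtain N where N: "{k. g k < bnd (A k \<inter> Y)} \<subseteq> {..<N}"
          using finite_nat_bounded[OF g[OF Y]] by blast
        have "\<forall>k\<ge>N. finite (row (A k \<inter> Y) (n k))"
        proof (intro allI impI)
          fix k assume k: "N \<le> k"
          have "k \<notin> {..<N}" using k by simp
          then have le: "bnd (A k \<inter> Y) \<le> g k" using N by (meson mem_Collect_eq not_le subsetD)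
          have "A k \<noteq> Y" using False by auto
          then have BIk: "A k \<inter> Y \<in> BI" using adI rA Y by blast
          show "finite (row (A k \<inter> Y) (n k))"
            using bndP[OF BIk, of "n k"] ng[of k] le by auto
        qed
        then show ?thesis by blast
      qed
      then obtain N where N: "\<And>k. k \<ge> N \<Longrightarrow> finite (row (A k \<inter> Y) (n k))" by blast
      have "{m. infinite (row (X \<inter> Y) m)} \<subseteq> n ` {..<N}"
      proof
        fix m assume m: "m \<in> {m. infinite (row (X \<inter> Y) m)}"
        then have "m \<in> range n" using rowX0 by (fastforce simp: row_def)
        then obtain k where k: "m = n k" by auto
        have "k < N"
        proof (rule ccontr)
          assume "\<not> k < N"
          then have "finite (row (A k \<inter> Y) (n k))" using N by auto
          moreover have "row (X \<inter> Y) (n k) \<subseteq> row (A k \<inter> Y) (n k)"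
            using rowX by (auto simp: row_def)
          ultimately show False using m k finite_subset by auto
        qed
        then show "m \<in> n ` {..<N}" using k by auto
      qed
      then have fin: "finite {m. infinite (row (X \<inter> Y) m)}" using finite_subset by blast
      have sec1: "sec (X \<inter> Y) m \<in> FinFin" for m
      proof (cases "m = c")
        case True
        then show ?thesis using fin by (simp add: sec_FinFin row_def)
      next
        case False
        then show ?thesis using secX0 by (simp add: sec_Int FinFin_empty)
      qed
      have "{m. infinite (sec (X \<inter> Y) m)} \<subseteq> {c}" using secX0 by (auto simp: sec_Int)
      then have "finite {m. infinite (sec (X \<inter> Y) m)}" using finite_subset by blast
      then show ?thesis using sec1 by (simp add: BI_iff)
    qed
    then show False using contra[OF mad XnBI] by blast
  qed
  then show ?thesis using card_le_img by blast
qed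

theorem mainTheorem2:
  fixes \<A> :: "(nat \<times> nat \<times> nat) set set"
  assumes "uncountable \<A>"
    and "mad_family BI \<A>"
  shows "\<exists>F :: (nat \<Rightarrow> nat) set. unbounded_family F \<and> card_le F \<A>"
proof -
  have ad: "ad_family BI \<A>" using assms(2) by (simp add: mad_family_def)
  have pos: "A \<notin> BI" if "A \<in> \<A>" for A using ad that by (simp add: ad_family_def)
  show ?thesis
  proof (cases "infinite {A\<in>\<A>. infinite {m. infinite (sec A m)}}")
    case True
    obtain A :: "nat \<Rightarrow> _" where A: "inj A" "range A \<subseteq> {A\<in>\<A>. infinite {m. infinite (sec A m)}}"
      using infinite_countable_subset[OF True] by blast
    have r: "range A \<subseteq> \<A>" using A(2) by blast
    have i: "\<And>k. infinite {m. infinite (sec (A k) m)}" using A(2) by blast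
    show ?thesis by (rule caseT2[OF assms(2) A(1) r i])
  next
    case F2: False
    show ?thesis
    proof (cases "\<exists>c. infinite {A\<in>\<A>. sec A c \<notin> FinFin}")
      case True
      then obtain c where c: "infinite {A\<in>\<A>. sec A c \<notin> FinFin}" by blast
      obtain A :: "nat \<Rightarrow> _" where A: "inj A" "range A \<subseteq> {A\<in>\<A>. sec A c \<notin> FinFin}"
        using infinite_countable_subset[OF c] by blast
      have r: "range A \<subseteq> \<A>" using A(2) by blast
      have i: "\<And>k. sec (A k) c \<notin> FinFin" using A(2) by blast
      show ?thesis by (rule caseT1[OF assms(2) A(1) r i])
    next
      case False
      have "\<A> \<subseteq> {A\<in>\<A>. infinite {m. infinite (sec A m)}} \<union> (\<Union>c. {A\<in>\<A>. sec A c \<notin> FinFin})"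
      proof
        fix A assume A: "A \<in> \<A>"
        then have "\<not> ((\<forall>n. sec A n \<in> FinFin) \<and> finite {n. infinite (sec A n)})"
          using pos BI_iff by blast
        then show "A \<in> {A\<in>\<A>. infinite {m. infinite (sec A m)}} \<union> (\<Union>c. {A\<in>\<A>. sec A c \<notin> FinFin})"
          using A by blast
      qed
      moreover have "countable ({A\<in>\<A>. infinite {m. infinite (sec A m)}} \<union> (\<Union>c. {A\<in>\<A>. sec A c \<notin> FinFin}))"
      proof (rule countable_Un)
        show "countable {A\<in>\<A>. infinite {m. infinite (sec A m)}}" using F2 by (blast intro: countable_finite)
        show "countable (\<Union>c. {A\<in>\<A>. sec A c \<notin> FinFin})"
          by (rule countable_UN) (use False in \<open>blast intro: countable_finite\<close>)+
      qed
      ultimately have "countable \<A>" by (rule countable_subset)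
      then show ?thesis using assms(1) by contradiction
    qed
  qed
qed

end
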